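(* Let $\mathbf T=\{\mathbf t=(t_1,t_2)\in\mathbb R_+^2:0\le t_2\le t_1\}$ with the metric $m(\mathbf t,\mathbf s)=|t_1-s_1|\vee|t_2-s_2|$, and let $X=\{X(\mathbf t),\mathbf t\in\mathbf T\}$ satisfy conditions $(D_1)$–$(D_3)$ below with constants $\beta,\gamma,\delta>0$, $C(\beta,\gamma)$, $C(\delta)$. For $0\le a<b$ put $\mathbf T_{a,b}=\{\mathbf t\in\mathbf T: a\le t_1\le b\}$. Then for any $\theta\in(0,1)$, any $\lambda>0$ and any $\kappa$ with $0<\kappa<1\wedge 2\gamma$, $$E\exp\Big\{\lambda\sup_{\mathbf t\in\mathbf T_{a,b}}|X(\mathbf t)|\Big\}\le 2\widetilde Q(\lambda,\theta),\qquad \widetilde Q(\lambda,\theta)=\exp\Big\{\frac{\lambda^2(b^\delta C(\delta))^2}{2(1-\theta)^2}+\frac{2\lambda}{1-\theta}\,b^{\delta+\kappa_1}\frac{C_2}{\theta^{\kappa/(2\gamma)}\kappa^{1/2}}\Big\},$$ where $\kappa_1=\frac{\kappa}{2}\big(1+\frac{\beta}{\gamma}-\frac{\delta}{\gamma}\big)$ and $C_2=\frac{2^{(1-\kappa)/2}}{1-\frac{\kappa}{2\gamma}}\,C(\delta)^{1-\frac{\kappa}{2\gamma}}\,C(\beta,\gamma)^{\frac{\kappa}{2\gamma}}$.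
   Context: Conditions on a random process $X$ indexed by $\mathbf T$: $(D_1)$ $X$ is a centered Gaussian process on $\mathbf T$, separable on the metric space $(\mathbf T,m)$. $(D_2)$ There exist $\beta>0,\gamma>0$ and a constant $C(\beta,\gamma)$ such that for all $\mathbf t,\mathbf s\in\mathbf T$: $\big(E(X(\mathbf t)-X(\mathbf s))^2\big)^{1/2}\le C(\beta,\gamma)(t_1\vee s_1)^\beta\, m(\mathbf t,\mathbf s)^\gamma$. $(D_3)$ There exist $\delta>0$ and a constant $C(\delta)$ such that for all $\mathbf t\in\mathbf T$: $\big(E X(\mathbf t)^2\big)^{1/2}\le C(\delta)t_1^\delta$. *)

theory Defs
  imports "HOL-Probability.Probability"
begin

definition Tset :: "(real \<times> real) set" where
  "Tset = {(t1, t2). 0 \<le> t2 \<and> t2 \<le> t1}"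

definition mdist :: "real \<times> real \<Rightarrow> real \<times> real \<Rightarrow> real" where
  "mdist t s = max \<bar>fst t - fst s\<bar> \<bar>snd t - snd s\<bar>"

definition Tab :: "real \<Rightarrow> real \<Rightarrow> (real \<times> real) set" where
  "Tab a b = {t \<in> Tset. a \<le> fst t \<and> fst t \<le> b}"

definition centered_normal_rv :: "'a measure \<Rightarrow> ('a \<Rightarrow> real) \<Rightarrow> bool" where
  "centered_normal_rv M Y \<longleftrightarrow> Y \<in> borel_measurable M \<and>
     (\<exists>\<sigma>\<ge>0. if \<sigma> = 0 then (AE \<omega> in M. Y \<omega> = 0)
              else distributed M lborel Y (normal_density 0 \<sigma>))"

text \<open>Centered Gaussian process on S: all finite linear combinations of the
  coordinates are centered normal (i.e. the finite-dimensional distributions are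
  centered jointly Gaussian).\<close>

definition centered_gaussian_process ::
  "'a measure \<Rightarrow> 'i set \<Rightarrow> ('i \<Rightarrow> 'a \<Rightarrow> real) \<Rightarrow> bool" where
  "centered_gaussian_process M S X \<longleftrightarrow>
     (\<forall>F c. finite F \<longrightarrow> F \<subseteq> S \<longrightarrow>
        centered_normal_rv M (\<lambda>\<omega>. \<Sum>t\<in>F. c t * X t \<omega>))"

definition separable_process ::
  "'a measure \<Rightarrow> 'i set \<Rightarrow> ('i \<Rightarrow> 'i \<Rightarrow> real) \<Rightarrow> ('i \<Rightarrow> 'a \<Rightarrow> real) \<Rightarrow> bool" where
  "separable_process M S d X \<longleftrightarrow>
     (\<exists>D N. countable D \<and> D \<subseteq> S \<and> N \<in> null_sets M \<and>
        (\<forall>t\<in>S. \<forall>e>0. \<exists>s\<in>D. d s t < e) \<and>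
        (\<forall>\<omega>\<in>space M - N. \<forall>t\<in>S. \<exists>s::nat \<Rightarrow> 'i. (\<forall>n. s n \<in> D) \<and>
            (\<lambda>n. d (s n) t) \<longlonglongrightarrow> 0 \<and> (\<lambda>n. X (s n) \<omega>) \<longlonglongrightarrow> X t \<omega>))"

end

theory Submission imports Defs begin

lemma normal_mgf_pointwise:
  assumes "\<sigma> > 0"
  shows "normal_density 0 \<sigma> x * exp (\<mu> * x) = exp (\<mu>^2 * \<sigma>^2 / 2) * normal_density (\<mu> * \<sigma>^2) \<sigma> x"
proof -
  have "-(x - 0)\<^sup>2 / (2 * \<sigma>\<^sup>2) + \<mu> * x = \<mu>^2 * \<sigma>^2 / 2 + (-(x - \<mu> * \<sigma>^2)\<^sup>2 / (2 * \<sigma>\<^sup>2))"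
    using assms by (simp add: field_simps power2_eq_square)
  then show ?thesis unfolding normal_density_def
    by (simp add: exp_add[symmetric] mult_ac)
qed

lemma gauss_mgf:
  assumes P: "prob_space M" and G: "centered_normal_rv M W"
    and s: "sqrt (\<integral>\<omega>. (W \<omega>)^2 \<partial>M) \<le> s"
  shows "(\<integral>\<^sup>+\<omega>. ennreal (exp (\<mu> * W \<omega>)) \<partial>M) \<le> ennreal (exp (\<mu>^2 * s^2 / 2))"
proof -
  interpret prob_space M by fact
  from G have Wm: "W \<in> borel_measurable M" and
    ex: "\<exists>\<sigma>\<ge>0. if \<sigma> = 0 then (AE \<omega> in M. W \<omega> = 0)
              else distributed M lborel W (normal_density 0 \<sigma>)"
    unfolding centered_normal_rv_def by auto
  then obtain \<sigma> where \<sigma>0: "\<sigma> \<ge> 0" and H: "if \<sigma> = 0 then (AE \<omega> in M. W \<omega> = 0)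
              else distributed M lborel W (normal_density 0 \<sigma>)" by blast
  have s0: "0 \<le> s" using s real_sqrt_ge_zero[of "\<integral>\<omega>. (W \<omega>)^2 \<partial>M"] by (smt (verit) integral_nonneg_AE zero_le_power2 AE_I2)
  show ?thesis
  proof (cases "\<sigma> = 0")
    case True
    then have ae: "AE \<omega> in M. W \<omega> = 0" using H by simp
    have "(\<integral>\<^sup>+\<omega>. ennreal (exp (\<mu> * W \<omega>)) \<partial>M) = (\<integral>\<^sup>+\<omega>. 1 \<partial>M)"
      by (rule nn_integral_cong_AE) (use ae in auto)
    also have "\<dots> = 1" by (simp add: emeasure_space_1)
    also have "\<dots> \<le> ennreal (exp (\<mu>^2 * s^2 / 2))" by simp
    finally show ?thesis .
  next
    case False
    then have sp: "\<sigma> > 0" using \<sigma>0 by simp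
    have D: "distributed M lborel W (normal_density 0 \<sigma>)" using H False by simp
    have "variance W = \<sigma>^2" by (rule normal_distributed_variance[OF sp D])
    moreover have "expectation W = 0" by (rule normal_distributed_expectation[OF sp D])
    ultimately have "(\<integral>\<omega>. (W \<omega>)^2 \<partial>M) = \<sigma>^2" by simp
    then have "\<sigma> \<le> s" using s sp by simp
    have "(\<integral>\<^sup>+\<omega>. ennreal (exp (\<mu> * W \<omega>)) \<partial>M)
        = (\<integral>\<^sup>+x. ennreal (normal_density 0 \<sigma> x) * ennreal (exp (\<mu> * x)) \<partial>lborel)"
      by (rule distributed_nn_integral[OF D, symmetric]) simp
    also have "\<dots> = (\<integral>\<^sup>+x. ennreal (exp (\<mu>^2 * \<sigma>^2 / 2)) * ennreal (normal_density (\<mu> * \<sigma>^2) \<sigma> x) \<partial>lborel)"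
      by (rule nn_integral_cong) (simp add: ennreal_mult[symmetric] normal_mgf_pointwise[OF sp])
    also have "\<dots> = ennreal (exp (\<mu>^2 * \<sigma>^2 / 2)) * (\<integral>\<^sup>+x. ennreal (normal_density (\<mu> * \<sigma>^2) \<sigma> x) \<partial>lborel)"
      by (rule nn_integral_cmult) simp
    also have "(\<integral>\<^sup>+x. ennreal (normal_density (\<mu> * \<sigma>^2) \<sigma> x) \<partial>lborel) = 1"
    proof -
      have "emeasure (density lborel (\<lambda>x. ennreal (normal_density (\<mu> * \<sigma>^2) \<sigma> x))) UNIV = 1"
        using prob_space.emeasure_space_1[OF prob_space_normal_density[OF sp]] by simp
      then show ?thesis by (simp add: emeasure_density)
    qed
    finally show ?thesis
      using \<open>\<sigma> \<le> s\<close> sp by (simp add: power_mono mult_left_mono divide_right_mono)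
  qed
qed

lemma exp_convex_sum_le:
  fixes a y :: "'i \<Rightarrow> real"
  assumes "finite I" "\<And>i. i \<in> I \<Longrightarrow> a i \<ge> 0" "(\<Sum>i\<in>I. a i) \<le> 1"
  shows "exp (\<Sum>i\<in>I. a i * y i) \<le> (\<Sum>i\<in>I. a i * exp (y i)) + (1 - (\<Sum>i\<in>I. a i))"
proof -
  define S where "S = insert None (Some ` I)"
  define a' where "a' = (\<lambda>j. case j of None \<Rightarrow> 1 - (\<Sum>i\<in>I. a i) | Some i \<Rightarrow> a i)"
  define y' where "y' = (\<lambda>j. case j of None \<Rightarrow> 0 | Some i \<Rightarrow> y i)"
  have fin: "finite S" using assms(1) by (simp add: S_def)
  have sumS: "\<And>f. (\<Sum>j\<in>S. f j) = f None + (\<Sum>i\<in>I. f (Some i))"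
    unfolding S_def using assms(1) by (simp add: sum.reindex)
  have "exp (\<Sum>j\<in>S. a' j *\<^sub>R y' j) \<le> (\<Sum>j\<in>S. a' j * exp (y' j))"
  proof (rule convex_on_sum[OF fin _ exp_convex])
    show "S \<noteq> {}" by (simp add: S_def)
    show "sum a' S = 1" by (simp add: sumS a'_def)
    show "\<And>i. i \<in> S \<Longrightarrow> 0 \<le> a' i" using assms by (auto simp: S_def a'_def)
  qed auto
  then show ?thesis by (simp add: sumS a'_def y'_def)
qed

lemma holder_sub:
  fixes Z :: "'i \<Rightarrow> 'a \<Rightarrow> real" and a T :: "'i \<Rightarrow> real"
  assumes P: "prob_space M" and fin: "finite I" and apos: "\<And>i. i \<in> I \<Longrightarrow> a i > 0"
    and asum: "(\<Sum>i\<in>I. a i) \<le> 1"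
    and Zm: "\<And>i. i \<in> I \<Longrightarrow> Z i \<in> borel_measurable M"
    and B: "\<And>i. i \<in> I \<Longrightarrow> (\<integral>\<^sup>+\<omega>. ennreal (exp (Z i \<omega> / a i)) \<partial>M) \<le> ennreal (exp (T i / a i))"
  shows "(\<integral>\<^sup>+\<omega>. ennreal (exp (\<Sum>i\<in>I. Z i \<omega>)) \<partial>M) \<le> ennreal (exp (\<Sum>i\<in>I. T i))"
proof -
  interpret prob_space M by fact
  define c where "c i = a i / exp (T i / a i)" for i
  define g where "g \<omega> = (\<Sum>i\<in>I. ennreal (c i) * ennreal (exp (Z i \<omega> / a i))) + ennreal (1 - (\<Sum>i\<in>I. a i))" for \<omega>
  have c0: "i \<in> I \<Longrightarrow> c i \<ge> 0" for i using apos[of i] by (simp add: c_def)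
  have pw: "ennreal (exp (\<Sum>i\<in>I. Z i \<omega>)) \<le> ennreal (exp (\<Sum>i\<in>I. T i)) * g \<omega>" for \<omega>
  proof -
    have "(\<Sum>i\<in>I. Z i \<omega>) = (\<Sum>i\<in>I. T i) + (\<Sum>i\<in>I. a i * ((Z i \<omega> - T i) / a i))"
    proof -
      have "(\<Sum>i\<in>I. Z i \<omega>) = (\<Sum>i\<in>I. T i + a i * ((Z i \<omega> - T i) / a i))"
        by (rule sum.cong) (use apos in \<open>auto dest: apos simp: less_irrefl\<close>)
      then show ?thesis by (simp add: sum.distrib)
    qed
    then have "exp (\<Sum>i\<in>I. Z i \<omega>) = exp (\<Sum>i\<in>I. T i) * exp (\<Sum>i\<in>I. a i * ((Z i \<omega> - T i) / a i))"
      by (simp add: exp_add)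
    also have "\<dots> \<le> exp (\<Sum>i\<in>I. T i) * ((\<Sum>i\<in>I. a i * exp ((Z i \<omega> - T i) / a i)) + (1 - (\<Sum>i\<in>I. a i)))"
      by (rule mult_left_mono[OF exp_convex_sum_le]) (use fin apos asum in \<open>auto simp: less_imp_le\<close>)
    also have "(\<Sum>i\<in>I. a i * exp ((Z i \<omega> - T i) / a i)) = (\<Sum>i\<in>I. c i * exp (Z i \<omega> / a i))"
      by (rule sum.cong) (simp_all add: c_def diff_divide_distrib exp_diff)
    finally have r: "exp (\<Sum>i\<in>I. Z i \<omega>) \<le> exp (\<Sum>i\<in>I. T i) * ((\<Sum>i\<in>I. c i * exp (Z i \<omega> / a i)) + (1 - (\<Sum>i\<in>I. a i)))" .
    have e1: "(\<Sum>i\<in>I. ennreal (c i) * ennreal (exp (Z i \<omega> / a i))) = (\<Sum>i\<in>I. ennreal (c i * exp (Z i \<omega> / a i)))"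
      by (rule sum.cong) (auto simp: ennreal_mult c0)
    also have "\<dots> = ennreal (\<Sum>i\<in>I. c i * exp (Z i \<omega> / a i))"
      by (rule sum_ennreal) (simp add: c0)
    finally have "g \<omega> = ennreal (\<Sum>i\<in>I. c i * exp (Z i \<omega> / a i)) + ennreal (1 - (\<Sum>i\<in>I. a i))"
      unfolding g_def by simp
    also have "\<dots> = ennreal ((\<Sum>i\<in>I. c i * exp (Z i \<omega> / a i)) + (1 - (\<Sum>i\<in>I. a i)))"
      by (rule ennreal_plus[symmetric]) (use asum c0 in \<open>auto intro!: sum_nonneg\<close>)
    finally have "g \<omega> = ennreal ((\<Sum>i\<in>I. c i * exp (Z i \<omega> / a i)) + (1 - (\<Sum>i\<in>I. a i)))" .
    then show ?thesis using r
      by (simp add: ennreal_mult'[symmetric] ennreal_leI)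
  qed
  have gm: "g \<in> borel_measurable M" unfolding g_def using Zm by (auto intro!: borel_measurable_sum)
  have "(\<integral>\<^sup>+\<omega>. g \<omega> \<partial>M) = (\<Sum>i\<in>I. ennreal (c i) * (\<integral>\<^sup>+\<omega>. ennreal (exp (Z i \<omega> / a i)) \<partial>M)) + ennreal (1 - (\<Sum>i\<in>I. a i))"
    unfolding g_def using Zm
    by (subst nn_integral_add) (auto simp: nn_integral_sum nn_integral_cmult emeasure_space_1 intro!: borel_measurable_sum)
  also have "\<dots> \<le> (\<Sum>i\<in>I. ennreal (c i) * ennreal (exp (T i / a i))) + ennreal (1 - (\<Sum>i\<in>I. a i))"
    by (intro add_mono sum_mono mult_left_mono B) auto
  also have "(\<Sum>i\<in>I. ennreal (c i) * ennreal (exp (T i / a i))) = (\<Sum>i\<in>I. ennreal (a i))"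
    by (rule sum.cong) (use c0 in \<open>auto simp: ennreal_mult[symmetric] c_def\<close>)
  also have "\<dots> + ennreal (1 - (\<Sum>i\<in>I. a i)) = 1"
  proof -
    have "(\<Sum>i\<in>I. ennreal (a i)) = ennreal (\<Sum>i\<in>I. a i)"
      by (rule sum_ennreal) (use apos in \<open>auto simp: less_imp_le\<close>)
    then show ?thesis using asum apos
      by (simp add: ennreal_plus[symmetric] less_imp_le sum_nonneg del: ennreal_plus)
  qed
  finally have ig: "(\<integral>\<^sup>+\<omega>. g \<omega> \<partial>M) \<le> 1" by simp
  have "(\<integral>\<^sup>+\<omega>. ennreal (exp (\<Sum>i\<in>I. Z i \<omega>)) \<partial>M) \<le> (\<integral>\<^sup>+\<omega>. ennreal (exp (\<Sum>i\<in>I. T i)) * g \<omega> \<partial>M)"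
    by (rule nn_integral_mono) (rule pw)
  also have "\<dots> = ennreal (exp (\<Sum>i\<in>I. T i)) * (\<integral>\<^sup>+\<omega>. g \<omega> \<partial>M)"
    by (rule nn_integral_cmult[OF gm])
  also have "\<dots> \<le> ennreal (exp (\<Sum>i\<in>I. T i)) * 1"
    by (rule mult_left_mono[OF ig]) simp
  finally show ?thesis by simp
qed


lemma mgf_max:
  fixes W :: "'i \<Rightarrow> 'a \<Rightarrow> real"
  assumes P: "prob_space M" and fin: "finite V" and ne: "V \<noteq> {}" and mu: "\<mu> \<ge> 0" and C: "C \<ge> 0"
    and Wm: "\<And>v. v \<in> V \<Longrightarrow> W v \<in> borel_measurable M"
    and B: "\<And>v. v \<in> V \<Longrightarrow> (\<integral>\<^sup>+\<omega>. ennreal (exp (\<mu> * W v \<omega>)) \<partial>M) \<le> ennreal C"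
  shows "(\<integral>\<^sup>+\<omega>. ennreal (exp (\<mu> * Max ((\<lambda>v. W v \<omega>) ` V))) \<partial>M) \<le> ennreal (real (card V) * C)"
proof -
  have pw: "ennreal (exp (\<mu> * Max ((\<lambda>v. W v \<omega>) ` V))) \<le> (\<Sum>v\<in>V. ennreal (exp (\<mu> * W v \<omega>)))" for \<omega>
  proof -
    obtain v where v: "v \<in> V" "Max ((\<lambda>v. W v \<omega>) ` V) = W v \<omega>"
    proof -
      have "Max ((\<lambda>v. W v \<omega>) ` V) \<in> (\<lambda>v. W v \<omega>) ` V"
        by (rule Max_in) (use fin ne in auto)
      then show ?thesis using that by auto
    qed
    have "ennreal (exp (\<mu> * W v \<omega>)) \<le> (\<Sum>v\<in>V. ennreal (exp (\<mu> * W v \<omega>)))"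
      by (rule member_le_sum) (use v fin in auto)
    then show ?thesis using v by simp
  qed
  have "(\<integral>\<^sup>+\<omega>. ennreal (exp (\<mu> * Max ((\<lambda>v. W v \<omega>) ` V))) \<partial>M) \<le> (\<integral>\<^sup>+\<omega>. (\<Sum>v\<in>V. ennreal (exp (\<mu> * W v \<omega>))) \<partial>M)"
    by (rule nn_integral_mono) (rule pw)
  also have "\<dots> = (\<Sum>v\<in>V. (\<integral>\<^sup>+\<omega>. ennreal (exp (\<mu> * W v \<omega>)) \<partial>M))"
    by (rule nn_integral_sum) (use Wm in auto)
  also have "\<dots> \<le> (\<Sum>v\<in>V. ennreal C)"
    by (rule sum_mono) (rule B)
  also have "\<dots> = ennreal (real (card V) * C)"
    using C by (simp add: ennreal_mult' ennreal_of_nat_eq_real_of_nat)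
  finally show ?thesis .
qed

lemma level_bound:
  fixes Z :: "'a \<Rightarrow> real" and n :: nat
  assumes n: "n \<ge> 1" and s: "s > 0" and la: "lam > 0" and q: "q > 0"
    and mg: "\<And>\<mu>. \<mu> \<ge> 0 \<Longrightarrow> (\<integral>\<^sup>+\<omega>. ennreal (exp (\<mu> * Z \<omega>)) \<partial>M) \<le> ennreal (real n * exp (\<mu>^2 * s^2 / 2))"
  shows "\<exists>a. 0 < a \<and> a \<le> q \<and> (\<integral>\<^sup>+\<omega>. ennreal (exp (lam * Z \<omega> / a)) \<partial>M)
            \<le> ennreal (exp ((lam * s * sqrt (2 * ln (real n)) + lam^2 * s^2 / (2 * q)) / a))"
proof -
  define T where "T = lam * s * sqrt (2 * ln (real n)) + lam^2 * s^2 / (2 * q)"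
  have ln0: "ln (real n) \<ge> 0" using n by simp
  have key: "\<exists>a. 0 < a \<and> a \<le> q \<and> a * ln (real n) + lam^2 * s^2 / (2 * a) \<le> T"
  proof (cases "ln (real n) = 0")
    case True
    then show ?thesis by (intro exI[of _ q]) (simp add: T_def q)
  next
    case False
    then have lp: "ln (real n) > 0" using ln0 by simp
    define w where "w = sqrt (2 * ln (real n))"
    have wp: "w > 0" using lp by (simp add: w_def)
    have w2: "ln (real n) = w^2 / 2" using lp by (simp add: w_def)
    define a0 where "a0 = lam * s / w"
    have a0p: "a0 > 0" using la s wp by (simp add: a0_def)
    have e0: "a0 * ln (real n) + lam^2 * s^2 / (2 * a0) = lam * s * w"
      using wp la s unfolding a0_def w2 by (simp add: field_simps power2_eq_square)
    show ?thesis
    proof (cases "a0 \<le> q")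
      case True
      have "lam^2 * s^2 / (2 * q) \<ge> 0" using q by simp
      then show ?thesis using True a0p e0 by (intro exI[of _ a0]) (simp add: T_def w_def[symmetric])
    next
      case False
      have "q * ln (real n) \<le> a0 * ln (real n)" using False lp by simp
      also have "a0 * ln (real n) = lam * s * w / 2"
        using wp la s unfolding a0_def w2 by (simp add: field_simps power2_eq_square)
      finally have "q * ln (real n) \<le> lam * s * w / 2" .
      moreover have "lam * s * w / 2 \<le> lam * s * w" using la s wp by simp
      ultimately have "q * ln (real n) \<le> lam * s * w" by linarith
      then show ?thesis using q by (intro exI[of _ q]) (simp add: T_def w_def[symmetric])
    qed
  qed
  then obtain a where a: "0 < a" "a \<le> q" "a * ln (real n) + lam^2 * s^2 / (2 * a) \<le> T" by blast
  have "(\<integral>\<^sup>+\<omega>. ennreal (exp (lam * Z \<omega> / a)) \<partial>M) = (\<integral>\<^sup>+\<omega>. ennreal (exp ((lam / a) * Z \<omega>)) \<partial>M)"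
    by simp
  also have "\<dots> \<le> ennreal (real n * exp ((lam / a)^2 * s^2 / 2))"
    by (rule mg) (use la a in simp)
  also have "real n * exp ((lam / a)^2 * s^2 / 2) = exp ((a * ln (real n) + lam^2 * s^2 / (2 * a)) / a)"
  proof -
    have e: "(a * ln (real n) + lam^2 * s^2 / (2 * a)) / a = ln (real n) + (lam / a)^2 * s^2 / 2"
      using a(1) by (simp add: add_divide_distrib power_divide power2_eq_square)
    have "real n = exp (ln (real n))" using n by simp
    then show ?thesis unfolding e exp_add by simp
  qed
  also have "ennreal \<dots> \<le> ennreal (exp (T / a))"
    using a by (intro ennreal_leI) (simp add: divide_right_mono)
  finally show ?thesis using a unfolding T_def by blast
qed


lemma chain_sum:
  fixes X :: "'i \<Rightarrow> 'a \<Rightarrow> real" and R :: "nat \<Rightarrow> 'i set" and p :: "nat \<Rightarrow> 'i \<Rightarrow> 'i"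
  assumes fin: "\<And>k. finite (R k)"
    and pm: "\<And>k v. v \<in> R (Suc k) \<Longrightarrow> p (Suc k) v \<in> R k"
    and Y0: "Y 0 = (\<lambda>\<omega>. Max ((\<lambda>v. X v \<omega>) ` R 0))"
    and YS: "\<And>k. Y (Suc k) = (\<lambda>\<omega>. Max ((\<lambda>v. X v \<omega> - X (p (Suc k) v) \<omega>) ` R (Suc k)))"
  shows "v \<in> R j \<Longrightarrow> X v \<omega> \<le> (\<Sum>k\<le>j. Y k \<omega>)"
proof (induction j arbitrary: v)
  case 0
  then show ?case using fin[of 0] by (simp add: Y0)
next
  case (Suc j)
  have "X v \<omega> = X (p (Suc j) v) \<omega> + (X v \<omega> - X (p (Suc j) v) \<omega>)" by simp
  also have "\<dots> \<le> (\<Sum>k\<le>j. Y k \<omega>) + Y (Suc j) \<omega>"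
    using Suc.IH[OF pm[OF Suc.prems]] Suc.prems fin[of "Suc j"] by (intro add_mono) (auto simp: YS)
  finally show ?case by simp
qed

lemma ln_le_powr:
  fixes y \<kappa> :: real
  assumes y: "y > 0" and k: "\<kappa> > 0"
  shows "ln y \<le> y powr \<kappa> / (\<kappa> * exp 1)"
proof -
  have lx: "ln x \<le> x / exp 1" if "x > 0" for x :: real
  proof -
    have "1 + (ln x - 1) \<le> exp (ln x - 1)" by (rule exp_ge_add_one_self)
    also have "\<dots> = x / exp 1" using that by (simp add: exp_diff)
    finally show ?thesis by simp
  qed
  have "ln (y powr \<kappa>) = \<kappa> * ln y" by (rule ln_powr)
  then have "ln y = ln (y powr \<kappa>) / \<kappa>" using k by simp
  also have "\<dots> \<le> (y powr \<kappa> / exp 1) / \<kappa>"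
    using lx[of "y powr \<kappa>"] y k by (intro divide_right_mono) auto
  finally show ?thesis by (simp add: mult.commute)
qed

lemma sqrt_ln_cells:
  fixes n z \<kappa> :: real
  assumes n: "n \<ge> 1" and nz: "n \<le> (of_int \<lfloor>z\<rfloor> + 1)^2" and z: "z > 0" and k: "\<kappa> > 0"
  shows "sqrt (2 * ln n) \<le> 2 powr (1 + \<kappa>/2) * z powr (\<kappa>/2) / sqrt (\<kappa> * exp 1)"
proof -
  have fl0: "of_int \<lfloor>z\<rfloor> \<ge> (0::real)" using z by simp
  have lnb: "ln (of_int \<lfloor>z\<rfloor> + 1) \<le> 2 powr \<kappa> * z powr \<kappa> / (\<kappa> * exp 1)"
  proof (cases "z < 1")
    case True
    then have "\<lfloor>z\<rfloor> = 0" using z by (simp add: floor_eq_iff)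
    then show ?thesis using k by simp
  next
    case False
    have "of_int \<lfloor>z\<rfloor> + 1 \<le> 2 * z" using False of_int_floor_le[of z] by linarith
    moreover have "0 < of_int \<lfloor>z\<rfloor> + (1::real)" using fl0 by linarith
    ultimately have "ln (of_int \<lfloor>z\<rfloor> + 1) \<le> ln (2 * z)" using z by (subst ln_le_cancel_iff) auto
    also have "\<dots> \<le> (2 * z) powr \<kappa> / (\<kappa> * exp 1)" by (rule ln_le_powr) (use z k in auto)
    also have "(2 * z) powr \<kappa> = 2 powr \<kappa> * z powr \<kappa>" using z by (simp add: powr_mult)
    finally show ?thesis .
  qed
  have "ln n \<le> ln ((of_int \<lfloor>z\<rfloor> + 1)^2)" using n nz fl0 by (subst ln_le_cancel_iff) auto
  also have "\<dots> = 2 * ln (of_int \<lfloor>z\<rfloor> + 1)" using fl0 by (simp add: ln_realpow)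
  finally have "2 * ln n \<le> 4 * (2 powr \<kappa> * z powr \<kappa> / (\<kappa> * exp 1))" using lnb by linarith
  then have "sqrt (2 * ln n) \<le> sqrt (4 * (2 powr \<kappa> * z powr \<kappa> / (\<kappa> * exp 1)))" by simp
  also have "\<dots> = 2 powr (1 + \<kappa>/2) * z powr (\<kappa>/2) / sqrt (\<kappa> * exp 1)"
  proof -
    have a: "sqrt (2 powr \<kappa>) = 2 powr (\<kappa>/2)" by (simp add: powr_half_sqrt[symmetric] powr_powr)
    have b: "sqrt (z powr \<kappa>) = z powr (\<kappa>/2)" using z by (simp add: powr_half_sqrt[symmetric] powr_powr)
    have c: "2 powr (1 + \<kappa>/2) = 2 * 2 powr (\<kappa>/2)" by (simp add: powr_add)
    show ?thesis by (simp add: real_sqrt_mult real_sqrt_divide a b c)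
  qed
  finally show ?thesis .
qed


lemma theta_powr_le:
  fixes \<theta> c :: real
  assumes "0 < \<theta>" "\<theta> < 1" "0 \<le> c" "c \<le> 1"
  shows "\<theta> powr c \<le> 1 - c * (1 - \<theta>)"
proof -
  have "exp ((1 - c) *\<^sub>R 0 + c *\<^sub>R ln \<theta>) \<le> (1 - c) * exp 0 + c * exp (ln \<theta>)"
    by (rule convex_onD[OF exp_convex]) (use assms in auto)
  then show ?thesis using assms by (simp add: powr_def algebra_simps)
qed

lemma geo_powr_sum:
  fixes \<theta> e :: real
  assumes "0 < \<theta>" "\<theta> < 1" "0 < e" "e \<le> 1"
  shows "(\<Sum>k\<le>K. (\<theta> powr e)^k) \<le> 1 / (e * (1 - \<theta>))"
proof -
  define x where "x = \<theta> powr e"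
  have x0: "0 < x" using assms by (simp add: x_def)
  have x1: "x \<le> 1 - e * (1 - \<theta>)" unfolding x_def by (rule theta_powr_le) (use assms in auto)
  have pos: "0 < e * (1 - \<theta>)" using assms by simp
  then have xl: "x < 1" using x1 by linarith
  have "(\<Sum>k\<le>K. x^k) = (\<Sum>k<Suc K. x^k)" by (simp add: lessThan_Suc_atMost)
  also have "\<dots> = (1 - x^Suc K) / (1 - x)" using sum_gp_strict[of x "Suc K"] xl by (simp del: sum.lessThan_Suc)
  also have "\<dots> \<le> 1 / (1 - x)" using xl x0 by (intro divide_right_mono) auto
  also have "\<dots> \<le> 1 / (e * (1 - \<theta>))" using x1 pos by (intro divide_left_mono) auto
  finally show ?thesis by (simp add: x_def)
qed

lemma geo_sum:
  fixes \<theta> :: real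
  assumes "0 < \<theta>" "\<theta> < 1"
  shows "(\<Sum>k\<le>K. \<theta>^k) \<le> 1 / (1 - \<theta>)"
  using geo_powr_sum[OF assms, of 1 K] assms by simp

lemma level_identity:
  fixes \<sigma>0 \<theta> L B \<gamma> \<kappa> :: real
  assumes pos: "\<sigma>0 > 0" "\<theta> > 0" "L > 0" "B > 0" "\<gamma> > 0"
  shows "\<sigma>0 * \<theta>^k * (2 powr (1 + \<kappa>/2) * (B / (\<sigma>0 * \<theta>^(k+1) / L) powr (1/\<gamma>)) powr (\<kappa>/2) / sqrt (\<kappa> * exp 1))
       = (2 powr (1 + \<kappa>/2) / sqrt (\<kappa> * exp 1) * \<sigma>0 powr (1 - \<kappa>/(2*\<gamma>)) * (L * B powr \<gamma>) powr (\<kappa>/(2*\<gamma>))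
           / \<theta> powr (\<kappa>/(2*\<gamma>))) * (\<theta> powr (1 - \<kappa>/(2*\<gamma>)))^k"
proof -
  define r where "r = \<kappa>/(2*\<gamma>)"
  have tk: "\<theta>^k = \<theta> powr real k" using pos by (simp add: powr_realpow)
  have tk1: "\<theta>^(k+1) = \<theta> powr (real k + 1)" using pos powr_realpow[of \<theta> "k+1"] by (simp add: add.commute)
  have "(B / (\<sigma>0 * \<theta>^(k+1) / L) powr (1/\<gamma>)) powr (\<kappa>/2)
        = B powr (\<kappa>/2) / ((\<sigma>0 * \<theta>^(k+1) / L) powr (1/\<gamma>)) powr (\<kappa>/2)"
    by (rule powr_divide)
  also have "((\<sigma>0 * \<theta>^(k+1) / L) powr (1/\<gamma>)) powr (\<kappa>/2) = (\<sigma>0 * \<theta>^(k+1) / L) powr r"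
    by (simp add: powr_powr r_def mult.commute)
  also have "(\<sigma>0 * \<theta>^(k+1) / L) powr r = \<sigma>0 powr r * \<theta> powr ((real k + 1) * r) / L powr r"
  proof -
    have t2: "(\<theta>^(k+1)) powr r = \<theta> powr ((real k + 1) * r)" unfolding tk1 by (simp add: powr_powr)
    show ?thesis by (simp only: powr_divide powr_mult t2)
  qed
  finally have e1: "(B / (\<sigma>0 * \<theta>^(k+1) / L) powr (1/\<gamma>)) powr (\<kappa>/2)
      = B powr (\<kappa>/2) * L powr r / (\<sigma>0 powr r * \<theta> powr ((real k + 1) * r))" by simp
  have e2: "(L * B powr \<gamma>) powr r = L powr r * B powr (\<kappa>/2)"
    using pos by (simp add: powr_mult powr_powr r_def)
  have e3: "(\<theta> powr (1 - r))^k = \<theta> powr (real k * (1 - r))"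
    using pos by (simp add: powr_realpow[symmetric] powr_powr mult.commute)
  have e4: "\<sigma>0 = \<sigma>0 powr 1" using pos by simp
  show ?thesis
    unfolding r_def[symmetric] e1 e2 e3
    using pos by (simp add: tk powr_diff powr_add distrib_right field_simps)
qed


lemma floor_same_close:
  fixes x y u :: real
  assumes "u > 0" "\<lfloor>x / u\<rfloor> = \<lfloor>y / u\<rfloor>"
  shows "\<bar>x - y\<bar> < u"
proof -
  have "\<bar>x / u - y / u\<bar> < 1"
    using assms(2) of_int_floor_le[of "x/u"] of_int_floor_le[of "y/u"]
      real_of_int_floor_add_one_gt[of "x/u"] real_of_int_floor_add_one_gt[of "y/u"] by linarith
  then have "\<bar>(x - y) / u\<bar> < 1" by (simp add: diff_divide_distrib)
  then show ?thesis using assms(1) by (simp add: abs_divide)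
qed

lemma card_cells:
  fixes F :: "(real \<times> real) set" and u B :: real and g :: "int \<times> int \<Rightarrow> real \<times> real"
  assumes fin: "finite F" and u: "u > 0" and B: "B > 0"
    and FB: "\<And>t. t \<in> F \<Longrightarrow> 0 \<le> snd t \<and> 0 \<le> fst t \<and> fst t \<le> B \<and> snd t \<le> B"
  shows "real (card ((\<lambda>t. g (\<lfloor>fst t / u\<rfloor>, \<lfloor>snd t / u\<rfloor>)) ` F)) \<le> (of_int \<lfloor>B / u\<rfloor> + 1)^2"
proof -
  define m where "m = \<lfloor>B / u\<rfloor>"
  have m0: "m \<ge> 0" using u B by (simp add: m_def)
  have sub: "(\<lambda>t. (\<lfloor>fst t / u\<rfloor>, \<lfloor>snd t / u\<rfloor>)) ` F \<subseteq> {0..m} \<times> {0..m}"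
  proof
    fix c assume "c \<in> (\<lambda>t. (\<lfloor>fst t / u\<rfloor>, \<lfloor>snd t / u\<rfloor>)) ` F"
    then obtain t where t: "t \<in> F" "c = (\<lfloor>fst t / u\<rfloor>, \<lfloor>snd t / u\<rfloor>)" by auto
    have "fst t / u \<le> B / u" "snd t / u \<le> B / u" using FB[OF t(1)] u by (auto intro: divide_right_mono)
    then have "\<lfloor>fst t / u\<rfloor> \<le> m" "\<lfloor>snd t / u\<rfloor> \<le> m" unfolding m_def by (auto intro: floor_mono)
    moreover have "\<lfloor>fst t / u\<rfloor> \<ge> 0" "\<lfloor>snd t / u\<rfloor> \<ge> 0" using FB[OF t(1)] u by auto
    ultimately show "c \<in> {0..m} \<times> {0..m}" using t by auto
  qed
  have "(\<lambda>t. g (\<lfloor>fst t / u\<rfloor>, \<lfloor>snd t / u\<rfloor>)) ` F = g ` ((\<lambda>t. (\<lfloor>fst t / u\<rfloor>, \<lfloor>snd t / u\<rfloor>)) ` F)"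
    by (simp add: image_image)
  then have "card ((\<lambda>t. g (\<lfloor>fst t / u\<rfloor>, \<lfloor>snd t / u\<rfloor>)) ` F) \<le> card ((\<lambda>t. (\<lfloor>fst t / u\<rfloor>, \<lfloor>snd t / u\<rfloor>)) ` F)"
    using card_image_le[of "(\<lambda>t. (\<lfloor>fst t / u\<rfloor>, \<lfloor>snd t / u\<rfloor>)) ` F" g] fin by simp
  also have "\<dots> \<le> card ({0..m} \<times> {0..m})" by (rule card_mono[OF _ sub]) simp
  also have "\<dots> = nat (m + 1) * nat (m + 1)" by (simp add: card_cartesian_product)
  finally have "real (card ((\<lambda>t. g (\<lfloor>fst t / u\<rfloor>, \<lfloor>snd t / u\<rfloor>)) ` F)) \<le> real (nat (m + 1) * nat (m + 1))"
    by (simp only: of_nat_le_iff)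
  also have "\<dots> = (of_int m + 1)^2" using m0 by (simp add: power2_eq_square)
  finally show ?thesis by (simp add: m_def)
qed


lemma chain_core:
  fixes X :: "real \<times> real \<Rightarrow> 'a \<Rightarrow> real" and F :: "(real \<times> real) set"
    and \<sigma>0 L B \<gamma> \<theta> lam \<kappa> :: real
  assumes P: "prob_space M" and finF: "finite F" and neF: "F \<noteq> {}"
    and FB: "\<And>t. t \<in> F \<Longrightarrow> 0 \<le> snd t \<and> 0 \<le> fst t \<and> fst t \<le> B \<and> snd t \<le> B"
    and G1: "\<And>u. u \<in> F \<Longrightarrow> centered_normal_rv M (X u)"
    and G2: "\<And>u v. u \<in> F \<Longrightarrow> v \<in> F \<Longrightarrow> centered_normal_rv M (\<lambda>\<omega>. X u \<omega> - X v \<omega>)"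
    and S0: "\<And>t. t \<in> F \<Longrightarrow> sqrt (\<integral>\<omega>. (X t \<omega>)^2 \<partial>M) \<le> \<sigma>0"
    and S1: "\<And>t s. t \<in> F \<Longrightarrow> s \<in> F \<Longrightarrow> sqrt (\<integral>\<omega>. (X t \<omega> - X s \<omega>)^2 \<partial>M) \<le> L * mdist t s powr \<gamma>"
    and pos: "\<sigma>0 > 0" "L > 0" "\<gamma> > 0" "B > 0" and th: "0 < \<theta>" "\<theta> < 1" and la: "lam > 0"
    and ka: "0 < \<kappa>" "\<kappa> < min 1 (2*\<gamma>)"
  shows "(\<integral>\<^sup>+\<omega>. ennreal (exp (lam * Max ((\<lambda>t. X t \<omega>) ` F))) \<partial>M)
     \<le> ennreal (exp (lam^2 * \<sigma>0^2 / (2 * (1-\<theta>)^2) + lam * (2 * 2 powr ((1-\<kappa>)/2) / ((1-\<theta>) * (1 - \<kappa>/(2*\<gamma>)) * sqrt \<kappa>)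
          * \<sigma>0 powr (1 - \<kappa>/(2*\<gamma>)) * (L * B powr \<gamma>) powr (\<kappa>/(2*\<gamma>)) / \<theta> powr (\<kappa>/(2*\<gamma>)))))"
proof -
  interpret prob_space M by fact
  define r where "r = \<kappa>/(2*\<gamma>)"
  have r01: "0 < r" "r < 1" using ka pos by (auto simp: r_def field_simps)
  define D0 where "D0 = L * B powr \<gamma>"
  have D0p: "D0 > 0" using pos by (simp add: D0_def)
  define c0 where "c0 = 2 powr (1 + \<kappa>/2) / sqrt (\<kappa> * exp 1) * \<sigma>0 powr (1 - r) * D0 powr r / \<theta> powr r"
  define Rr where "Rr = 2 * 2 powr ((1-\<kappa>)/2) / ((1-\<theta>) * (1 - r) * sqrt \<kappa>) * \<sigma>0 powr (1 - r) * D0 powr r / \<theta> powr r"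
  define \<rho> where "\<rho> = 2 powr (\<kappa> - 1/2) / sqrt (exp 1)"
  have Rpos: "Rr > 0" using pos th r01 ka D0p by (simp add: Rr_def)
  have \<rho>1: "\<rho> < 1"
  proof -
    have "2 powr (\<kappa> - 1/2) < 2 powr (1/2)" using ka by (intro powr_less_mono) auto
    also have "2 powr (1/2) = sqrt 2" by (simp add: powr_half_sqrt)
    also have "sqrt 2 \<le> sqrt (exp 1)" using exp_ge_add_one_self[of 1] by simp
    finally show ?thesis by (simp add: \<rho>_def)
  qed
  have c0R: "c0 / ((1 - r) * (1 - \<theta>)) = \<rho> * Rr"
  proof -
    have "2 powr (1 + \<kappa>/2) = 2 powr (\<kappa> - 1/2) * 2 powr 1 * 2 powr ((1-\<kappa>)/2)"
    proof -
      have e: "(\<kappa> - 1/2) + 1 + (1-\<kappa>)/2 = 1 + \<kappa>/2" by (simp add: field_simps)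
      show ?thesis by (simp only: e[symmetric] powr_add)
    qed
    then show ?thesis using th r01 ka
      by (simp add: c0_def Rr_def \<rho>_def real_sqrt_mult field_simps)
  qed
  obtain K where Kb: "\<sigma>0 * \<theta>^(Suc K) * sqrt (2 * ln (real (card F))) \<le> (1 - \<rho>) * Rr"
  proof -
    have "(\<lambda>n. \<sigma>0 * \<theta> * sqrt (2 * ln (real (card F))) * \<theta>^n) \<longlonglongrightarrow> \<sigma>0 * \<theta> * sqrt (2 * ln (real (card F))) * 0"
      by (intro tendsto_mult tendsto_const LIMSEQ_power_zero) (use th in simp)
    moreover have "0 < (1 - \<rho>) * Rr" using \<rho>1 Rpos by simp
    ultimately have "eventually (\<lambda>n. \<sigma>0 * \<theta> * sqrt (2 * ln (real (card F))) * \<theta>^n < (1 - \<rho>) * Rr) sequentially"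
      by (intro order_tendstoD(2)) auto
    then obtain n where "\<sigma>0 * \<theta> * sqrt (2 * ln (real (card F))) * \<theta>^n < (1 - \<rho>) * Rr"
      by (auto simp: eventually_sequentially)
    then show ?thesis by (intro that[of n]) (simp add: mult_ac)
  qed
  define u where "u k = (\<sigma>0 * \<theta>^(k+1) / L) powr (1/\<gamma>)" for k
  have upos: "u k > 0" for k using pos th by (simp add: u_def)
  have uL: "L * u k powr \<gamma> = \<sigma>0 * \<theta>^(k+1)" for k
    using pos th by (simp add: u_def powr_powr)
  define cell where "cell k t = (\<lfloor>fst t / u k\<rfloor>, \<lfloor>snd t / u k\<rfloor>)" for k and t :: "real \<times> real"
  define rep where "rep k t = (SOME s. s \<in> F \<and> cell k s = cell k t)" for k t
  have rep: "rep k t \<in> F \<and> cell k (rep k t) = cell k t" if "t \<in> F" for k t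
    unfolding rep_def by (rule someI[of _ t]) (use that in auto)
  define R where "R k = (if k \<le> K then rep k ` F else F)" for k
  define p where "p k v = (if k \<le> Suc K then rep (k - 1) v else v)" for k v
  have RF: "R k \<subseteq> F" for k using rep by (auto simp: R_def)
  have Rfin: "finite (R k)" for k using finF by (auto simp: R_def)
  have Rne: "R k \<noteq> {}" for k using neF by (auto simp: R_def)
  have RSK: "R (Suc K) = F" by (simp add: R_def)
  have pm: "p (Suc k) v \<in> R k" if "v \<in> R (Suc k)" for k v
  proof -
    have vF: "v \<in> F" using that RF by auto
    show ?thesis
    proof (cases "k \<le> K")
      case True
      then show ?thesis using vF by (auto simp: R_def p_def)
    next
      case False
      then show ?thesis using vF by (auto simp: R_def p_def)
    qed
  qed
  define Y where "Y k \<omega> = (if k = 0 then Max ((\<lambda>v. X v \<omega>) ` R 0) else Max ((\<lambda>v. X v \<omega> - X (p k v) \<omega>) ` R k))" for k \<omega>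
  have chain: "X v \<omega> \<le> (\<Sum>k\<le>j. Y k \<omega>)" if "v \<in> R j" for v j \<omega>
    by (rule chain_sum[of R p Y X, OF Rfin pm _ _ that]) (auto simp: Y_def fun_eq_iff)
  have Xm: "X v \<in> borel_measurable M" if "v \<in> F" for v
    using G1[OF that] by (simp add: centered_normal_rv_def)
  have pF: "p k v \<in> F" if "v \<in> R k" "k > 0" for k v
    using that RF by (cases k) (auto dest!: pm)
  have Ym: "Y k \<in> borel_measurable M" for k
  proof (cases "k = 0")
    case True
    then show ?thesis unfolding Y_def[abs_def] using RF
      by (auto intro!: borel_measurable_Max Rfin Xm)
  next
    case False
    then show ?thesis unfolding Y_def[abs_def] using RF pF
      by (auto intro!: borel_measurable_Max borel_measurable_diff Rfin Xm)
  qed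
  define s where "s k = \<sigma>0 * \<theta>^k" for k
  define q where "q k = (1 - \<theta>) * \<theta>^k" for k
  have spos: "s k > 0" for k using pos th by (simp add: s_def)
  have qpos: "q k > 0" for k using th by (simp add: q_def)
  have mdist_cell: "L * mdist v (rep j v) powr \<gamma> \<le> s (Suc j)" if "v \<in> F" for v j
  proof -
    have c: "cell j (rep j v) = cell j v" using rep[OF that] by simp
    have "\<bar>fst v - fst (rep j v)\<bar> < u j"
      by (rule floor_same_close[OF upos]) (use c in \<open>simp add: cell_def\<close>)
    moreover have "\<bar>snd v - snd (rep j v)\<bar> < u j"
      by (rule floor_same_close[OF upos]) (use c in \<open>simp add: cell_def\<close>)
    ultimately have md: "mdist v (rep j v) \<le> u j" by (simp add: mdist_def)
    have "mdist v (rep j v) powr \<gamma> \<le> u j powr \<gamma>"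
      by (rule powr_mono2) (use md pos in \<open>auto simp: mdist_def\<close>)
    then have "L * mdist v (rep j v) powr \<gamma> \<le> L * u j powr \<gamma>" using pos by simp
    also have "\<dots> = s (Suc j)" by (simp add: uL s_def)
    finally show ?thesis .
  qed
  have mg: "(\<integral>\<^sup>+\<omega>. ennreal (exp (\<mu> * Y k \<omega>)) \<partial>M) \<le> ennreal (real (card (R k)) * exp (\<mu>^2 * (s k)^2 / 2))"
    if "k \<le> Suc K" "\<mu> \<ge> 0" for k \<mu>
  proof (cases k)
    case 0
    have "(\<integral>\<^sup>+\<omega>. ennreal (exp (\<mu> * Y k \<omega>)) \<partial>M) = (\<integral>\<^sup>+\<omega>. ennreal (exp (\<mu> * Max ((\<lambda>v. X v \<omega>) ` R 0))) \<partial>M)"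
      by (simp add: Y_def 0)
    also have "\<dots> \<le> ennreal (real (card (R 0)) * exp (\<mu>^2 * (s 0)^2 / 2))"
    proof (rule mgf_max[OF P Rfin Rne that(2)])
      fix v assume v: "v \<in> R 0"
      then have vF: "v \<in> F" using RF by auto
      show "X v \<in> borel_measurable M" by (rule Xm[OF vF])
      show "(\<integral>\<^sup>+\<omega>. ennreal (exp (\<mu> * X v \<omega>)) \<partial>M) \<le> ennreal (exp (\<mu>^2 * (s 0)^2 / 2))"
        by (rule gauss_mgf[OF P G1[OF vF]]) (use S0[OF vF] in \<open>simp add: s_def\<close>)
    qed simp
    finally show ?thesis using 0 by simp
  next
    case (Suc j)
    have "(\<integral>\<^sup>+\<omega>. ennreal (exp (\<mu> * Y k \<omega>)) \<partial>M) = (\<integral>\<^sup>+\<omega>. ennreal (exp (\<mu> * Max ((\<lambda>v. X v \<omega> - X (p k v) \<omega>) ` R k))) \<partial>M)"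
      by (simp add: Y_def Suc)
    also have "\<dots> \<le> ennreal (real (card (R k)) * exp (\<mu>^2 * (s k)^2 / 2))"
    proof (rule mgf_max[OF P Rfin Rne that(2)])
      fix v assume v: "v \<in> R k"
      then have vF: "v \<in> F" using RF by auto
      have pv: "p k v = rep j v" using that(1) Suc by (simp add: p_def)
      have pF': "rep j v \<in> F" using rep[OF vF] by simp
      show "(\<lambda>\<omega>. X v \<omega> - X (p k v) \<omega>) \<in> borel_measurable M" using Xm[OF vF] Xm[OF pF'] pv by simp
      have "sqrt (\<integral>\<omega>. (X v \<omega> - X (rep j v) \<omega>)^2 \<partial>M) \<le> s k"
        using S1[OF vF pF'] mdist_cell[OF vF, of j] Suc by simp
      then show "(\<integral>\<^sup>+\<omega>. ennreal (exp (\<mu> * (X v \<omega> - X (p k v) \<omega>))) \<partial>M) \<le> ennreal (exp (\<mu>^2 * (s k)^2 / 2))"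
        unfolding pv by (rule gauss_mgf[OF P G2[OF vF pF']])
    qed simp
    finally show ?thesis .
  qed
  define T where "T k = lam * s k * sqrt (2 * ln (real (card (R k)))) + lam^2 * (s k)^2 / (2 * q k)" for k
  have lv: "\<exists>a. 0 < a \<and> a \<le> q k \<and> (\<integral>\<^sup>+\<omega>. ennreal (exp (lam * Y k \<omega> / a)) \<partial>M) \<le> ennreal (exp (T k / a))"
    if "k \<in> {..Suc K}" for k
  proof -
    have "card (R k) \<ge> 1" using Rfin[of k] Rne[of k] by (simp add: Suc_le_eq card_gt_0_iff)
    from level_bound[OF this spos la qpos, of M "Y k"] mg that show ?thesis by (simp add: T_def)
  qed
  then obtain a where a: "\<And>k. k \<in> {..Suc K} \<Longrightarrow> 0 < a k \<and> a k \<le> q k \<and>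
      (\<integral>\<^sup>+\<omega>. ennreal (exp (lam * Y k \<omega> / a k)) \<partial>M) \<le> ennreal (exp (T k / a k))"
    by metis
  have asum: "(\<Sum>k\<le>Suc K. a k) \<le> 1"
  proof -
    have "(\<Sum>k\<le>Suc K. a k) \<le> (\<Sum>k\<le>Suc K. q k)" by (rule sum_mono) (use a in auto)
    also have "\<dots> = (1 - \<theta>) * (\<Sum>k\<le>Suc K. \<theta>^k)" unfolding q_def by (rule sum_distrib_left[symmetric])
    also have "\<dots> \<le> (1 - \<theta>) * (1 / (1 - \<theta>))" using geo_sum[OF th, of "Suc K"] th by (intro mult_left_mono) auto
    finally show ?thesis using th by simp
  qed
  have H: "(\<integral>\<^sup>+\<omega>. ennreal (exp (\<Sum>k\<le>Suc K. lam * Y k \<omega>)) \<partial>M) \<le> ennreal (exp (\<Sum>k\<le>Suc K. T k))"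
    by (rule holder_sub[OF P _ _ asum]) (use a Ym in auto)
  have pw: "lam * Max ((\<lambda>t. X t \<omega>) ` F) \<le> (\<Sum>k\<le>Suc K. lam * Y k \<omega>)" for \<omega>
  proof -
    have "Max ((\<lambda>t. X t \<omega>) ` F) \<in> (\<lambda>t. X t \<omega>) ` F" by (rule Max_in) (use finF neF in auto)
    then obtain v where v: "v \<in> F" "Max ((\<lambda>t. X t \<omega>) ` F) = X v \<omega>" by auto
    have "X v \<omega> \<le> (\<Sum>k\<le>Suc K. Y k \<omega>)" by (rule chain) (use v RSK in simp)
    then show ?thesis using v la by (simp add: sum_distrib_left[symmetric])
  qed
  have "(\<integral>\<^sup>+\<omega>. ennreal (exp (lam * Max ((\<lambda>t. X t \<omega>) ` F))) \<partial>M) \<le> (\<integral>\<^sup>+\<omega>. ennreal (exp (\<Sum>k\<le>Suc K. lam * Y k \<omega>)) \<partial>M)"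
    by (rule nn_integral_mono) (use pw in \<open>simp add: ennreal_leI\<close>)
  also have "\<dots> \<le> ennreal (exp (\<Sum>k\<le>Suc K. T k))" by (rule H)
  also have "\<dots> \<le> ennreal (exp (lam^2 * \<sigma>0^2 / (2 * (1-\<theta>)^2) + lam * Rr))"
  proof (intro ennreal_leI exp_mono)
    have lin: "s k * sqrt (2 * ln (real (card (R k)))) \<le> c0 * (\<theta> powr (1 - r))^k" if "k \<le> K" for k
    proof -
      have "rep k ` F = (\<lambda>t. (\<lambda>c. SOME s. s \<in> F \<and> cell k s = c) (\<lfloor>fst t / u k\<rfloor>, \<lfloor>snd t / u k\<rfloor>)) ` F"
        by (simp add: rep_def cell_def)
      then have cb: "real (card (R k)) \<le> (of_int \<lfloor>B / u k\<rfloor> + 1)^2"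
        using card_cells[OF finF upos pos(4) FB] that by (simp add: R_def)
      have n1: "real (card (R k)) \<ge> 1" using Rfin[of k] Rne[of k] by (simp add: Suc_le_eq card_gt_0_iff)
      have "sqrt (2 * ln (real (card (R k)))) \<le> 2 powr (1 + \<kappa>/2) * (B / u k) powr (\<kappa>/2) / sqrt (\<kappa> * exp 1)"
        by (rule sqrt_ln_cells[OF n1 cb]) (use pos upos ka in auto)
      then have "s k * sqrt (2 * ln (real (card (R k)))) \<le> s k * (2 powr (1 + \<kappa>/2) * (B / u k) powr (\<kappa>/2) / sqrt (\<kappa> * exp 1))"
        using spos by (intro mult_left_mono) (auto simp: less_imp_le)
      also have "\<dots> = c0 * (\<theta> powr (1 - r))^k"
        unfolding s_def u_def c0_def r_def D0_def by (rule level_identity) (use pos th in auto)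
      finally show ?thesis .
    qed
    have linsum: "(\<Sum>k\<le>Suc K. s k * sqrt (2 * ln (real (card (R k))))) \<le> Rr"
    proof -
      have "(\<Sum>k\<le>Suc K. s k * sqrt (2 * ln (real (card (R k)))))
          = (\<Sum>k\<le>K. s k * sqrt (2 * ln (real (card (R k))))) + s (Suc K) * sqrt (2 * ln (real (card F)))"
        by (simp add: RSK)
      also have "(\<Sum>k\<le>K. s k * sqrt (2 * ln (real (card (R k))))) \<le> (\<Sum>k\<le>K. c0 * (\<theta> powr (1 - r))^k)"
        by (rule sum_mono) (use lin in auto)
      also have "\<dots> = c0 * (\<Sum>k\<le>K. (\<theta> powr (1 - r))^k)" by (rule sum_distrib_left[symmetric])
      also have "\<dots> \<le> c0 * (1 / ((1 - r) * (1 - \<theta>)))"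
      proof (rule mult_left_mono)
        show "(\<Sum>k\<le>K. (\<theta> powr (1 - r))^k) \<le> 1 / ((1 - r) * (1 - \<theta>))"
          by (rule geo_powr_sum) (use th r01 in auto)
        show "0 \<le> c0" using pos th D0p ka by (simp add: c0_def)
      qed
      also have "c0 * (1 / ((1 - r) * (1 - \<theta>))) = \<rho> * Rr" using c0R by simp
      also have "s (Suc K) * sqrt (2 * ln (real (card F))) \<le> (1 - \<rho>) * Rr" using Kb by (simp add: s_def)
      finally show ?thesis by (simp add: algebra_simps)
    qed
    have quad: "(\<Sum>k\<le>Suc K. lam^2 * (s k)^2 / (2 * q k)) \<le> lam^2 * \<sigma>0^2 / (2 * (1-\<theta>)^2)"
    proof -
      have "(\<Sum>k\<le>Suc K. lam^2 * (s k)^2 / (2 * q k)) = (\<Sum>k\<le>Suc K. lam^2 * \<sigma>0^2 / (2 * (1 - \<theta>)) * \<theta>^k)"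
        by (rule sum.cong) (use th in \<open>auto simp: s_def q_def power2_eq_square power_mult_distrib\<close>)
      also have "\<dots> = lam^2 * \<sigma>0^2 / (2 * (1 - \<theta>)) * (\<Sum>k\<le>Suc K. \<theta>^k)" by (rule sum_distrib_left[symmetric])
      also have "\<dots> \<le> lam^2 * \<sigma>0^2 / (2 * (1 - \<theta>)) * (1 / (1 - \<theta>))"
        by (rule mult_left_mono[OF geo_sum[OF th]]) (use th in simp)
      also have "\<dots> = lam^2 * \<sigma>0^2 / (2 * (1-\<theta>)^2)" by (simp add: power2_eq_square)
      finally show ?thesis .
    qed
    have "(\<Sum>k\<le>Suc K. T k) = lam * (\<Sum>k\<le>Suc K. s k * sqrt (2 * ln (real (card (R k))))) + (\<Sum>k\<le>Suc K. lam^2 * (s k)^2 / (2 * q k))"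
    proof -
      have "(\<Sum>k\<le>Suc K. T k) = (\<Sum>k\<le>Suc K. lam * (s k * sqrt (2 * ln (real (card (R k)))))) + (\<Sum>k\<le>Suc K. lam^2 * (s k)^2 / (2 * q k))"
        unfolding T_def by (simp add: sum.distrib mult.assoc del: sum.atMost_Suc)
      then show ?thesis by (simp only: sum_distrib_left[symmetric])
    qed
    also have "\<dots> \<le> lam * Rr + lam^2 * \<sigma>0^2 / (2 * (1-\<theta>)^2)"
      using linsum quad la by (intro add_mono mult_left_mono) auto
    finally show "(\<Sum>k\<le>Suc K. T k) \<le> lam^2 * \<sigma>0^2 / (2 * (1-\<theta>)^2) + lam * Rr" by simp
  qed
  finally show ?thesis by (simp add: Rr_def D0_def r_def)
qed


lemma gp_lin:
  assumes G: "centered_gaussian_process M S X" and u: "u \<in> S" and v: "v \<in> S"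
  shows "centered_normal_rv M (\<lambda>\<omega>. a1 * X u \<omega> + a2 * X v \<omega>)"
proof -
  have H: "\<And>F c. finite F \<Longrightarrow> F \<subseteq> S \<Longrightarrow> centered_normal_rv M (\<lambda>\<omega>. \<Sum>t\<in>F. c t * X t \<omega>)"
    using G unfolding centered_gaussian_process_def by simp
  show ?thesis
  proof (cases "u = v")
  case True
  have "centered_normal_rv M (\<lambda>\<omega>. \<Sum>t\<in>{u}. (\<lambda>_. a1 + a2) t * X t \<omega>)"
    by (rule H) (use u in auto)
  moreover have "(\<lambda>\<omega>. \<Sum>t\<in>{u}. (\<lambda>_. a1 + a2) t * X t \<omega>) = (\<lambda>\<omega>. a1 * X u \<omega> + a2 * X v \<omega>)"
    using True by (simp add: fun_eq_iff algebra_simps)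
  ultimately show ?thesis by simp
next
  case False
  define c where "c t = (if t = u then a1 else a2)" for t
  have "centered_normal_rv M (\<lambda>\<omega>. \<Sum>t\<in>{u, v}. c t * X t \<omega>)"
    by (rule H) (use u v in auto)
  moreover have "(\<lambda>\<omega>. \<Sum>t\<in>{u, v}. c t * X t \<omega>) = (\<lambda>\<omega>. a1 * X u \<omega> + a2 * X v \<omega>)"
    using False by (simp add: fun_eq_iff c_def)
  ultimately show ?thesis by simp
  qed
qed

lemma final_identity:
  fixes b Cd Cbg \<beta> \<gamma> \<delta> \<kappa> :: real
  assumes "b > 0" "Cd > 0" "Cbg > 0" "\<gamma> > 0"
  shows "(b powr \<delta> * Cd) powr (1 - \<kappa>/(2*\<gamma>)) * ((Cbg * b powr \<beta>) * b powr \<gamma>) powr (\<kappa>/(2*\<gamma>))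
       = b powr (\<delta> + \<kappa> / 2 * (1 + \<beta> / \<gamma> - \<delta> / \<gamma>)) * Cd powr (1 - \<kappa>/(2*\<gamma>)) * Cbg powr (\<kappa>/(2*\<gamma>))"
proof -
  have e: "\<delta> * (1 - \<kappa>/(2*\<gamma>)) + (\<beta> * (\<kappa>/(2*\<gamma>)) + \<gamma> * (\<kappa>/(2*\<gamma>))) = \<delta> + \<kappa> / 2 * (1 + \<beta> / \<gamma> - \<delta> / \<gamma>)"
    using assms by (simp add: field_simps)
  have "(b powr \<delta> * Cd) powr (1 - \<kappa>/(2*\<gamma>)) * ((Cbg * b powr \<beta>) * b powr \<gamma>) powr (\<kappa>/(2*\<gamma>))
      = b powr (\<delta> * (1 - \<kappa>/(2*\<gamma>))) * Cd powr (1 - \<kappa>/(2*\<gamma>)) * (Cbg powr (\<kappa>/(2*\<gamma>)) * b powr (\<beta> * (\<kappa>/(2*\<gamma>))) * b powr (\<gamma> * (\<kappa>/(2*\<gamma>))))"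
    using assms by (simp only: powr_mult powr_powr)
  also have "\<dots> = b powr (\<delta> * (1 - \<kappa>/(2*\<gamma>)) + (\<beta> * (\<kappa>/(2*\<gamma>)) + \<gamma> * (\<kappa>/(2*\<gamma>)))) * Cd powr (1 - \<kappa>/(2*\<gamma>)) * Cbg powr (\<kappa>/(2*\<gamma>))"
    by (simp only: powr_add mult_ac)
  finally show ?thesis unfolding e .
qed


lemma finite_abs_bound:
  fixes X :: "real \<times> real \<Rightarrow> 'a \<Rightarrow> real" and F :: "(real \<times> real) set"
    and \<sigma>0 L B \<gamma> \<theta> lam \<kappa> :: real
  assumes P: "prob_space M" and G: "centered_gaussian_process M Tset X"
    and finF: "finite F" and neF: "F \<noteq> {}" and FT: "F \<subseteq> Tset" and FB: "\<And>t. t \<in> F \<Longrightarrow> fst t \<le> B"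
    and S0: "\<And>t. t \<in> F \<Longrightarrow> sqrt (\<integral>\<omega>. (X t \<omega>)^2 \<partial>M) \<le> \<sigma>0"
    and S1: "\<And>t s. t \<in> F \<Longrightarrow> s \<in> F \<Longrightarrow> sqrt (\<integral>\<omega>. (X t \<omega> - X s \<omega>)^2 \<partial>M) \<le> L * mdist t s powr \<gamma>"
    and pos: "\<sigma>0 > 0" "L > 0" "\<gamma> > 0" "B > 0" and th: "0 < \<theta>" "\<theta> < 1" and la: "lam > 0"
    and ka: "0 < \<kappa>" "\<kappa> < min 1 (2*\<gamma>)"
  shows "(\<integral>\<^sup>+\<omega>. (SUP t\<in>F. ennreal (exp (lam * \<bar>X t \<omega>\<bar>))) \<partial>M)
     \<le> 2 * ennreal (exp (lam^2 * \<sigma>0^2 / (2 * (1-\<theta>)^2) + lam * (2 * 2 powr ((1-\<kappa>)/2) / ((1-\<theta>) * (1 - \<kappa>/(2*\<gamma>)) * sqrt \<kappa>)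
          * \<sigma>0 powr (1 - \<kappa>/(2*\<gamma>)) * (L * B powr \<gamma>) powr (\<kappa>/(2*\<gamma>)) / \<theta> powr (\<kappa>/(2*\<gamma>)))))"
    (is "_ \<le> 2 * ?E")
proof -
  interpret prob_space M by fact
  have FB': "0 \<le> snd t \<and> 0 \<le> fst t \<and> fst t \<le> B \<and> snd t \<le> B" if "t \<in> F" for t
    using FT FB[OF that] that by (auto simp: Tset_def)
  have lin: "centered_normal_rv M (\<lambda>\<omega>. a1 * X u \<omega> + a2 * X v \<omega>)" if "u \<in> F" "v \<in> F" for u v a1 a2
    by (rule gp_lin[OF G]) (use that FT in auto)
  have Xm: "X u \<in> borel_measurable M" if "u \<in> F" for u
    using lin[OF that that, of 1 0] by (simp add: centered_normal_rv_def)
  have A: "(\<integral>\<^sup>+\<omega>. ennreal (exp (lam * Max ((\<lambda>t. X t \<omega>) ` F))) \<partial>M) \<le> ?E"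
  proof (rule chain_core[OF P finF neF FB' _ _ S0 S1 pos th la ka])
    show "centered_normal_rv M (X u)" if "u \<in> F" for u
      using lin[OF that that, of 1 0] by simp
    show "centered_normal_rv M (\<lambda>\<omega>. X u \<omega> - X v \<omega>)" if "u \<in> F" "v \<in> F" for u v
      using lin[OF that, of 1 "-1"] by simp
  qed
  have B: "(\<integral>\<^sup>+\<omega>. ennreal (exp (lam * Max ((\<lambda>t. - X t \<omega>) ` F))) \<partial>M) \<le> ?E"
  proof (rule chain_core[OF P finF neF FB' _ _ _ _ pos th la ka])
    show "centered_normal_rv M (\<lambda>\<omega>. - X u \<omega>)" if "u \<in> F" for u
      using lin[OF that that, of "-1" 0] by simp
    show "centered_normal_rv M (\<lambda>\<omega>. - X u \<omega> - - X v \<omega>)" if "u \<in> F" "v \<in> F" for u v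
      using lin[OF that, of "-1" 1] by simp
    show "sqrt (\<integral>\<omega>. (- X t \<omega>)^2 \<partial>M) \<le> \<sigma>0" if "t \<in> F" for t using S0[OF that] by simp
    show "sqrt (\<integral>\<omega>. (- X t \<omega> - - X s \<omega>)^2 \<partial>M) \<le> L * mdist t s powr \<gamma>" if "t \<in> F" "s \<in> F" for t s
    proof -
      have "(\<lambda>\<omega>. (- X t \<omega> - - X s \<omega>)^2) = (\<lambda>\<omega>. (X t \<omega> - X s \<omega>)^2)" by (simp add: fun_eq_iff power2_commute)
      then show ?thesis using S1[OF that] by simp
    qed
  qed
  have pw: "(SUP t\<in>F. ennreal (exp (lam * \<bar>X t \<omega>\<bar>)))
      \<le> ennreal (exp (lam * Max ((\<lambda>t. X t \<omega>) ` F))) + ennreal (exp (lam * Max ((\<lambda>t. - X t \<omega>) ` F)))" for \<omega>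
  proof (rule SUP_least)
    fix t assume t: "t \<in> F"
    have m1: "X t \<omega> \<le> Max ((\<lambda>t. X t \<omega>) ` F)" using finF t by (intro Max_ge) auto
    have m2: "- X t \<omega> \<le> Max ((\<lambda>t. - X t \<omega>) ` F)" using finF t by (intro Max_ge) auto
    have "exp (lam * \<bar>X t \<omega>\<bar>) \<le> exp (lam * Max ((\<lambda>t. X t \<omega>) ` F)) + exp (lam * Max ((\<lambda>t. - X t \<omega>) ` F))"
    proof (cases "X t \<omega> \<ge> 0")
      case True
      then have "exp (lam * \<bar>X t \<omega>\<bar>) \<le> exp (lam * Max ((\<lambda>t. X t \<omega>) ` F))" using m1 la by simp
      moreover have "0 < exp (lam * Max ((\<lambda>t. - X t \<omega>) ` F))" by simp
      ultimately show ?thesis by linarith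
    next
      case False
      then have "exp (lam * \<bar>X t \<omega>\<bar>) \<le> exp (lam * Max ((\<lambda>t. - X t \<omega>) ` F))" using mult_left_mono[OF m2, of lam] la by simp
      moreover have "0 < exp (lam * Max ((\<lambda>t. X t \<omega>) ` F))" by simp
      ultimately show ?thesis by linarith
    qed
    then show "ennreal (exp (lam * \<bar>X t \<omega>\<bar>)) \<le> ennreal (exp (lam * Max ((\<lambda>t. X t \<omega>) ` F))) + ennreal (exp (lam * Max ((\<lambda>t. - X t \<omega>) ` F)))"
    proof -
      have "ennreal (exp (lam * Max ((\<lambda>t. X t \<omega>) ` F))) + ennreal (exp (lam * Max ((\<lambda>t. - X t \<omega>) ` F)))
         = ennreal (exp (lam * Max ((\<lambda>t. X t \<omega>) ` F)) + exp (lam * Max ((\<lambda>t. - X t \<omega>) ` F)))"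
        by (rule ennreal_plus[symmetric]) auto
      then show ?thesis using \<open>exp (lam * \<bar>X t \<omega>\<bar>) \<le> _\<close> by (simp only:) (rule ennreal_leI)
    qed
  qed
  have "(\<integral>\<^sup>+\<omega>. (SUP t\<in>F. ennreal (exp (lam * \<bar>X t \<omega>\<bar>))) \<partial>M)
      \<le> (\<integral>\<^sup>+\<omega>. ennreal (exp (lam * Max ((\<lambda>t. X t \<omega>) ` F))) + ennreal (exp (lam * Max ((\<lambda>t. - X t \<omega>) ` F))) \<partial>M)"
    by (rule nn_integral_mono) (rule pw)
  also have "\<dots> = (\<integral>\<^sup>+\<omega>. ennreal (exp (lam * Max ((\<lambda>t. X t \<omega>) ` F))) \<partial>M) + (\<integral>\<^sup>+\<omega>. ennreal (exp (lam * Max ((\<lambda>t. - X t \<omega>) ` F))) \<partial>M)"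
    by (rule nn_integral_add) (use finF Xm in \<open>auto intro!: borel_measurable_Max\<close>)
  also have "\<dots> \<le> ?E + ?E" by (rule add_mono[OF A B])
  finally show ?thesis by (simp only: mult_2)
qed

lemma lin_alg:
  fixes lam c P1 P2 Q1 Q2 Q3 \<theta> r sk tr :: real
  assumes h: "P1 * P2 = Q1 * Q2 * Q3" and nz: "1 - \<theta> \<noteq> 0" "1 - r \<noteq> 0" "sk \<noteq> 0" "tr \<noteq> 0"
  shows "lam * (2 * c / ((1 - \<theta>) * (1 - r) * sk) * P1 * P2 / tr)
       = 2 * lam / (1 - \<theta>) * Q1 * ((c / (1 - r) * Q2 * Q3) / (tr * sk))"
proof -
  have "lam * (2 * c / ((1 - \<theta>) * (1 - r) * sk) * P1 * P2 / tr) = 2 * lam * c * (P1 * P2) / ((1 - \<theta>) * (1 - r) * sk * tr)"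
    using nz by (simp add: field_simps)
  also have "\<dots> = 2 * lam * c * (Q1 * Q2 * Q3) / ((1 - \<theta>) * (1 - r) * sk * tr)" by (simp only: h)
  also have "\<dots> = 2 * lam / (1 - \<theta>) * Q1 * ((c / (1 - r) * Q2 * Q3) / (tr * sk))"
    using nz by (simp add: field_simps)
  finally show ?thesis .
qed

theorem theorem3p2:
  fixes M :: "'a measure" and X :: "real \<times> real \<Rightarrow> 'a \<Rightarrow> real"
    and \<beta> \<gamma> \<delta> Cbg Cd a b \<theta> lam \<kappa> :: real
  assumes "prob_space M"
    and D1: "centered_gaussian_process M Tset X" "separable_process M Tset mdist X"
    and pars: "\<beta> > 0" "\<gamma> > 0" "\<delta> > 0"
    and D2: "\<And>t s. t \<in> Tset \<Longrightarrow> s \<in> Tset \<Longrightarrow>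
       sqrt (\<integral>\<omega>. (X t \<omega> - X s \<omega>)^2 \<partial>M)
         \<le> Cbg * (max (fst t) (fst s)) powr \<beta> * (mdist t s) powr \<gamma>"
    and D3: "\<And>t. t \<in> Tset \<Longrightarrow> sqrt (\<integral>\<omega>. (X t \<omega>)^2 \<partial>M) \<le> Cd * (fst t) powr \<delta>"
    and ab: "0 \<le> a" "a < b"
    and th: "0 < \<theta>" "\<theta> < 1"
    and la: "lam > 0"
    and ka: "0 < \<kappa>" "\<kappa> < min 1 (2 * \<gamma>)"
  shows "(\<integral>\<^sup>+ \<omega>. (SUP t\<in>Tab a b. ennreal (exp (lam * \<bar>X t \<omega>\<bar>))) \<partial>M)
    \<le> ennreal (2 * exp (lam^2 * (b powr \<delta> * Cd)^2 / (2 * (1 - \<theta>)^2)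
        + 2 * lam / (1 - \<theta>) * b powr (\<delta> + \<kappa> / 2 * (1 + \<beta> / \<gamma> - \<delta> / \<gamma>))
          * ((2 powr ((1 - \<kappa>) / 2) / (1 - \<kappa> / (2 * \<gamma>))
               * Cd powr (1 - \<kappa> / (2 * \<gamma>)) * Cbg powr (\<kappa> / (2 * \<gamma>)))
             / (\<theta> powr (\<kappa> / (2 * \<gamma>)) * sqrt \<kappa>))))"
proof -
  interpret prob_space M by fact
  have bpos: "b > 0" using ab by simp
  have isq: "0 \<le> (\<integral>\<omega>. f \<omega> ^ 2 \<partial>M)" for f :: "'a \<Rightarrow> real" by (intro integral_nonneg_AE) simp
  have Cd0: "Cd \<ge> 0"
  proof -
    have t0: "(b, 0) \<in> Tset" using bpos by (simp add: Tset_def)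
    have "0 \<le> Cd * b powr \<delta>" using D3[OF t0] isq[of "X (b,0)"] by (smt (verit) real_sqrt_ge_zero fst_conv)
    then show ?thesis using bpos by (simp add: zero_le_mult_iff)
  qed
  have Cbg0: "Cbg \<ge> 0"
  proof -
    have t0: "(b, 0) \<in> Tset" "(b, b) \<in> Tset" using bpos by (auto simp: Tset_def)
    have "0 \<le> Cbg * (max b b) powr \<beta> * (mdist (b,0) (b,b)) powr \<gamma>"
      using D2[OF t0] isq[of "\<lambda>\<omega>. X (b,0) \<omega> - X (b,b) \<omega>"] by (smt (verit) real_sqrt_ge_zero fst_conv)
    moreover have "mdist (b,0) (b,b) = b" using bpos by (simp add: mdist_def)
    ultimately show ?thesis using bpos by (simp add: zero_le_mult_iff)
  qed
  define r where "r = \<kappa> / (2 * \<gamma>)"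
  define g where "g \<eta> = 2 * exp (lam^2 * ((b+\<eta>) powr \<delta> * (Cd+\<eta>))^2 / (2 * (1 - \<theta>)^2)
        + 2 * lam / (1 - \<theta>) * (b+\<eta>) powr (\<delta> + \<kappa> / 2 * (1 + \<beta> / \<gamma> - \<delta> / \<gamma>))
          * ((2 powr ((1 - \<kappa>) / 2) / (1 - \<kappa> / (2 * \<gamma>))
               * (Cd+\<eta>) powr (1 - \<kappa> / (2 * \<gamma>)) * (Cbg+\<eta>) powr (\<kappa> / (2 * \<gamma>)))
             / (\<theta> powr (\<kappa> / (2 * \<gamma>)) * sqrt \<kappa>)))" for \<eta>
  have bound: "(\<integral>\<^sup>+ \<omega>. (SUP t\<in>Tab a b. ennreal (exp (lam * \<bar>X t \<omega>\<bar>))) \<partial>M) \<le> ennreal (g \<eta>)" if eta: "\<eta> > 0" for \<eta>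
  proof -
    define b' where "b' = b + \<eta>"
    define Cd' where "Cd' = Cd + \<eta>"
    define Cbg' where "Cbg' = Cbg + \<eta>"
    have b'p: "b' > 0" and Cd'p: "Cd' > 0" and Cbg'p: "Cbg' > 0"
      using bpos eta Cd0 Cbg0 by (auto simp: b'_def Cd'_def Cbg'_def)
    define \<sigma>0 where "\<sigma>0 = b' powr \<delta> * Cd'"
    define L where "L = Cbg' * b' powr \<beta>"
    have \<sigma>0p: "\<sigma>0 > 0" and Lp: "L > 0" using b'p Cd'p Cbg'p by (auto simp: \<sigma>0_def L_def)
    obtain D N where DN: "countable D \<and> D \<subseteq> Tset \<and> N \<in> null_sets M \<and>
        (\<forall>t\<in>Tset. \<forall>e>0. \<exists>s\<in>D. mdist s t < e) \<and>
        (\<forall>\<omega>\<in>space M - N. \<forall>t\<in>Tset. \<exists>s::nat \<Rightarrow> real \<times> real. (\<forall>n. s n \<in> D) \<and>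
            (\<lambda>n. mdist (s n) t) \<longlonglongrightarrow> 0 \<and> (\<lambda>n. X (s n) \<omega>) \<longlonglongrightarrow> X t \<omega>)"
      using D1(2) unfolding separable_process_def by (elim exE) (erule that)
    then have D: "countable D" "D \<subseteq> Tset" and N: "N \<in> null_sets M"
      and sep: "\<And>\<omega> t. \<omega> \<in> space M - N \<Longrightarrow> t \<in> Tset \<Longrightarrow> \<exists>s::nat \<Rightarrow> real \<times> real. (\<forall>n. s n \<in> D) \<and>
            (\<lambda>n. mdist (s n) t) \<longlonglongrightarrow> 0 \<and> (\<lambda>n. X (s n) \<omega>) \<longlonglongrightarrow> X t \<omega>"
      by auto
    define D' where "D' = {s \<in> D. fst s \<le> b'}"
    define h where "h s \<omega> = ennreal (exp (lam * \<bar>X s \<omega>\<bar>))" for s \<omega>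
    define E where "E = 2 * ennreal (exp (lam^2 * \<sigma>0^2 / (2 * (1-\<theta>)^2) + lam * (2 * 2 powr ((1-\<kappa>)/2) / ((1-\<theta>) * (1 - \<kappa>/(2*\<gamma>)) * sqrt \<kappa>)
          * \<sigma>0 powr (1 - \<kappa>/(2*\<gamma>)) * (L * b' powr \<gamma>) powr (\<kappa>/(2*\<gamma>)) / \<theta> powr (\<kappa>/(2*\<gamma>)))))"
    have gE: "E = ennreal (g \<eta>)"
    proof -
      have fi: "\<sigma>0 powr (1 - \<kappa>/(2*\<gamma>)) * (L * b' powr \<gamma>) powr (\<kappa>/(2*\<gamma>))
          = b' powr (\<delta> + \<kappa> / 2 * (1 + \<beta> / \<gamma> - \<delta> / \<gamma>)) * Cd' powr (1 - \<kappa>/(2*\<gamma>)) * Cbg' powr (\<kappa>/(2*\<gamma>))"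
        unfolding \<sigma>0_def L_def by (rule final_identity) (use b'p Cd'p Cbg'p pars in auto)
      have r1: "1 - \<kappa> / (2 * \<gamma>) \<noteq> 0" using ka pars by (auto simp: field_simps)
      have lin: "lam * (2 * 2 powr ((1-\<kappa>)/2) / ((1-\<theta>) * (1 - \<kappa>/(2*\<gamma>)) * sqrt \<kappa>)
          * \<sigma>0 powr (1 - \<kappa>/(2*\<gamma>)) * (L * b' powr \<gamma>) powr (\<kappa>/(2*\<gamma>)) / \<theta> powr (\<kappa>/(2*\<gamma>)))
        = 2 * lam / (1 - \<theta>) * b' powr (\<delta> + \<kappa> / 2 * (1 + \<beta> / \<gamma> - \<delta> / \<gamma>))
          * ((2 powr ((1 - \<kappa>) / 2) / (1 - \<kappa> / (2 * \<gamma>))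
               * Cd' powr (1 - \<kappa> / (2 * \<gamma>)) * Cbg' powr (\<kappa> / (2 * \<gamma>)))
             / (\<theta> powr (\<kappa> / (2 * \<gamma>)) * sqrt \<kappa>))"
        by (rule lin_alg[OF fi]) (use th ka r1 in auto)
      have "E = ennreal 2 * ennreal (exp (lam^2 * (b' powr \<delta> * Cd')^2 / (2 * (1-\<theta>)^2) + 2 * lam / (1 - \<theta>) * b' powr (\<delta> + \<kappa> / 2 * (1 + \<beta> / \<gamma> - \<delta> / \<gamma>))
          * ((2 powr ((1 - \<kappa>) / 2) / (1 - \<kappa> / (2 * \<gamma>))
               * Cd' powr (1 - \<kappa> / (2 * \<gamma>)) * Cbg' powr (\<kappa> / (2 * \<gamma>)))
             / (\<theta> powr (\<kappa> / (2 * \<gamma>)) * sqrt \<kappa>))))"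
        unfolding E_def lin[symmetric] by (simp add: \<sigma>0_def)
      also have "\<dots> = ennreal (g \<eta>)"
        unfolding g_def b'_def[symmetric] Cd'_def[symmetric] Cbg'_def[symmetric] by (simp add: ennreal_mult)
      finally show ?thesis .
    qed
    have Xm: "X s \<in> borel_measurable M" if "s \<in> Tset" for s
      using gp_lin[OF D1(1) that that, of 1 0] by (simp add: centered_normal_rv_def)
    have fin: "(\<integral>\<^sup>+\<omega>. (SUP t\<in>F. h t \<omega>) \<partial>M) \<le> E" if F: "finite F" "F \<noteq> {}" "F \<subseteq> D'" for F
    proof -
      have FT: "F \<subseteq> Tset" using F(3) D(2) by (auto simp: D'_def)
      have FB: "fst t \<le> b'" if "t \<in> F" for t using F(3) that by (auto simp: D'_def)
      have fst0: "0 \<le> fst t" if "t \<in> F" for t using FT that by (auto simp: Tset_def)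
      have S0: "sqrt (\<integral>\<omega>. (X t \<omega>)^2 \<partial>M) \<le> \<sigma>0" if t: "t \<in> F" for t
      proof -
        have "fst t powr \<delta> \<le> b' powr \<delta>" by (rule powr_mono2) (use pars fst0[OF t] FB[OF t] in auto)
        then have "Cd * fst t powr \<delta> \<le> Cd' * b' powr \<delta>"
          by (intro mult_mono) (use Cd0 Cd'p eta in \<open>auto simp: Cd'_def\<close>)
        then show ?thesis using D3[of t] FT t by (auto simp: \<sigma>0_def mult.commute)
      qed
      have S1: "sqrt (\<integral>\<omega>. (X t \<omega> - X s \<omega>)^2 \<partial>M) \<le> L * mdist t s powr \<gamma>" if t: "t \<in> F" "s \<in> F" for t s
      proof -
        have "max (fst t) (fst s) powr \<beta> \<le> b' powr \<beta>"
          by (rule powr_mono2) (use pars fst0[OF t(1)] FB[OF t(1)] FB[OF t(2)] in auto)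
        then have "Cbg * max (fst t) (fst s) powr \<beta> \<le> Cbg' * b' powr \<beta>"
          by (intro mult_mono) (use Cbg0 Cbg'p eta in \<open>auto simp: Cbg'_def\<close>)
        then have "Cbg * max (fst t) (fst s) powr \<beta> * mdist t s powr \<gamma> \<le> L * mdist t s powr \<gamma>"
          unfolding L_def by (intro mult_right_mono) auto
        moreover have "t \<in> Tset" "s \<in> Tset" using FT t by auto
        ultimately show ?thesis using D2 by (meson order.trans)
      qed
      show ?thesis unfolding h_def E_def
        by (rule finite_abs_bound[OF assms(1) D1(1) F(1) F(2) FT FB S0 S1 \<sigma>0p Lp pars(2) b'p th la ka])
    qed
    have supD: "(\<integral>\<^sup>+\<omega>. (SUP s\<in>D'. h s \<omega>) \<partial>M) \<le> E"
    proof (cases "D' = {}")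
      case True
      then show ?thesis by (simp add: bot_ennreal)
    next
      case False
      have cD': "countable D'" using D(1) by (auto simp: D'_def intro: countable_subset[of _ D])
      define e where "e = from_nat_into D'"
      have eD: "e n \<in> D'" for n using False by (simp add: e_def from_nat_into)
      have re: "range e = D'" using False cD' by (simp add: e_def)
      define f where "f n \<omega> = (SUP s\<in>e ` {..n}. h s \<omega>)" for n \<omega>
      have un: "D' = (\<Union>n. e ` {..n})" using re by auto
      have eq: "(SUP s\<in>D'. h s \<omega>) = (SUP n. f n \<omega>)" for \<omega>
        unfolding f_def by (subst un) (rule SUP_UNION)
      have hm: "h s \<in> borel_measurable M" if "s \<in> D'" for s
      proof -
        have [measurable]: "X s \<in> borel_measurable M" by (rule Xm) (use that D(2) in \<open>auto simp: D'_def\<close>)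
        show ?thesis unfolding h_def[abs_def] by measurable
      qed
      have fm: "f n \<in> borel_measurable M" for n
        unfolding f_def
      proof (rule borel_measurable_SUP)
        show "countable (e ` {..n})" by (rule countable_finite) simp
        fix s assume "s \<in> e ` {..n}"
        then obtain i where "s = e i" by blast
        then show "h s \<in> borel_measurable M" using hm[OF eD[of i]] by simp
      qed
      have inc: "incseq f"
        unfolding incseq_def f_def le_fun_def by (auto intro!: SUP_subset_mono)
      have "(\<integral>\<^sup>+\<omega>. (SUP s\<in>D'. h s \<omega>) \<partial>M) = (\<integral>\<^sup>+\<omega>. (SUP n. f n \<omega>) \<partial>M)" by (simp add: eq)
      also have "\<dots> = (SUP n. integral\<^sup>N M (f n))" by (rule nn_integral_monotone_convergence_SUP[OF inc fm])
      also have "\<dots> \<le> E"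
      proof (rule SUP_least)
        fix n
        show "integral\<^sup>N M (f n) \<le> E" unfolding f_def by (rule fin) (auto intro: eD)
      qed
      finally show ?thesis .
    qed
    have ae: "AE \<omega> in M. (SUP t\<in>Tab a b. h t \<omega>) \<le> (SUP s\<in>D'. h s \<omega>)"
    proof -
      have "AE \<omega> in M. \<omega> \<notin> N" by (rule AE_not_in[OF N])
      then show ?thesis
      proof (rule AE_mp, intro AE_I2 impI)
        fix \<omega> assume \<omega>: "\<omega> \<in> space M" "\<omega> \<notin> N"
        show "(SUP t\<in>Tab a b. h t \<omega>) \<le> (SUP s\<in>D'. h s \<omega>)"
        proof (rule SUP_least)
          fix t assume t: "t \<in> Tab a b"
          have tT: "t \<in> Tset" and tb: "fst t \<le> b" using t by (auto simp: Tab_def)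
          obtain sq where sq: "\<forall>n. sq n \<in> D" "(\<lambda>n. mdist (sq n) t) \<longlonglongrightarrow> 0" "(\<lambda>n. X (sq n) \<omega>) \<longlonglongrightarrow> X t \<omega>"
            using sep[of \<omega> t] \<omega> tT by auto
          have lim: "(\<lambda>n. h (sq n) \<omega>) \<longlonglongrightarrow> h t \<omega>" unfolding h_def by (intro tendsto_intros sq(3))
          have ev: "eventually (\<lambda>n. h (sq n) \<omega> \<le> (SUP s\<in>D'. h s \<omega>)) sequentially"
          proof -
            have "eventually (\<lambda>n. mdist (sq n) t < \<eta>) sequentially" using order_tendstoD(2)[OF sq(2) eta] .
            then show ?thesis
            proof eventually_elim
              case (elim n)
              have "fst (sq n) - fst t \<le> mdist (sq n) t" by (simp add: mdist_def)
              then have "sq n \<in> D'" using elim tb sq(1) by (auto simp: D'_def b'_def)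
              then show ?case by (rule SUP_upper)
            qed
          qed
          show "h t \<omega> \<le> (SUP s\<in>D'. h s \<omega>)" by (rule tendsto_le[OF trivial_limit_sequentially tendsto_const lim ev])
        qed
      qed
    qed
    have "(\<integral>\<^sup>+ \<omega>. (SUP t\<in>Tab a b. ennreal (exp (lam * \<bar>X t \<omega>\<bar>))) \<partial>M) \<le> (\<integral>\<^sup>+\<omega>. (SUP s\<in>D'. h s \<omega>) \<partial>M)"
      by (rule nn_integral_mono_AE) (use ae in \<open>simp add: h_def\<close>)
    also note supD
    finally show ?thesis unfolding gE .
  qed
  have lim: "(g \<longlongrightarrow> g 0) (at_right 0)"
  proof -
    have r1: "1 - \<kappa> / (2 * \<gamma>) > 0" "\<kappa> / (2 * \<gamma>) > 0" using ka pars by (auto simp: field_simps)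
    have ev1: "eventually (\<lambda>x. 0 \<le> Cd + x) (at_right (0::real))"
      using eventually_at_right_less[of "0::real"] by eventually_elim (use Cd0 in simp)
    have ev2: "eventually (\<lambda>x. 0 \<le> Cbg + x) (at_right (0::real))"
      using eventually_at_right_less[of "0::real"] by eventually_elim (use Cbg0 in simp)
    have nz: "1 - \<theta> \<noteq> 0" "\<theta> powr (\<kappa> / (2 * \<gamma>)) * sqrt \<kappa> \<noteq> 0" "1 - \<kappa> / (2 * \<gamma>) \<noteq> 0"
      using th ka r1 by auto
    show ?thesis unfolding g_def
      by (intro tendsto_intros) (use r1 ev1 ev2 nz bpos th in auto)
  qed
  have "(\<integral>\<^sup>+ \<omega>. (SUP t\<in>Tab a b. ennreal (exp (lam * \<bar>X t \<omega>\<bar>))) \<partial>M) \<le> ennreal (g 0)"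
  proof (rule tendsto_le[OF trivial_limit_at_right_real])
    show "((\<lambda>\<eta>. ennreal (g \<eta>)) \<longlongrightarrow> ennreal (g 0)) (at_right 0)" by (rule tendsto_ennrealI[OF lim])
    show "((\<lambda>\<eta>. (\<integral>\<^sup>+ \<omega>. (SUP t\<in>Tab a b. ennreal (exp (lam * \<bar>X t \<omega>\<bar>))) \<partial>M)) \<longlongrightarrow>
        (\<integral>\<^sup>+ \<omega>. (SUP t\<in>Tab a b. ennreal (exp (lam * \<bar>X t \<omega>\<bar>))) \<partial>M)) (at_right 0)" by (rule tendsto_const)
    show "\<forall>\<^sub>F \<eta> in at_right 0. (\<integral>\<^sup>+ \<omega>. (SUP t\<in>Tab a b. ennreal (exp (lam * \<bar>X t \<omega>\<bar>))) \<partial>M) \<le> ennreal (g \<eta>)"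
      using eventually_at_right_less[of "0::real"] by eventually_elim (rule bound)
  qed
  also have "g 0 = 2 * exp (lam^2 * (b powr \<delta> * Cd)^2 / (2 * (1 - \<theta>)^2)
        + 2 * lam / (1 - \<theta>) * b powr (\<delta> + \<kappa> / 2 * (1 + \<beta> / \<gamma> - \<delta> / \<gamma>))
          * ((2 powr ((1 - \<kappa>) / 2) / (1 - \<kappa> / (2 * \<gamma>))
               * Cd powr (1 - \<kappa> / (2 * \<gamma>)) * Cbg powr (\<kappa> / (2 * \<gamma>)))
             / (\<theta> powr (\<kappa> / (2 * \<gamma>)) * sqrt \<kappa>)))" by (simp add: g_def)
  finally show ?thesis .
qed

end
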